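(* Let $v_\lambda(k)$ ($|k|<\Lambda$, $\lambda\in\{1,2\}$) be nonzero complex coefficients and $w\ge0$ an integrable function on $\mathbb{R}^3$, $\widehat w(k)=\int e^{ik\cdot x}w(x)\,dx$, such that for all complex families $f_\lambda(k)$ $$\sum_{|k|<\Lambda,\lambda}\frac{|f_\lambda(k)|^2}{|v_\lambda(k)|^2}\ \ge\ \sum_{|k|,|k'|<\Lambda,\ \lambda,\lambda'}\frac{1}{2V}\overline{f_\lambda(k)}\,f_{\lambda'}(k')\,\widehat w(k-k'),$$ and let $L(y)=\frac{1}{\sqrt{2V}}\sum_{|k|<\Lambda,\lambda}\sqrt{|k|}\,a_\lambda(k)\overline{v_\lambda(k)}e^{ik\cdot y}$. Then, with $c=\frac{1}{2V}\sum_{|k|<\Lambda,\lambda}|k|\,|v_\lambda(k)|^2$, both of the following hold as quadratic forms: $$H_f\ge -c\int w(y)\,dy+\frac14\int w(y)\big(L(y)+L^*(y)\big)^2dy,$$ $$H_f\ge -c\int w(y)\,dy-\frac14\int w(y)\big(L(y)-L^*(y)\big)^2dy.$$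
   Context: The radiation field lives in a box of side $L$, volume $V=L^3$; modes $k\in(2\pi/L)\mathbb{Z}^3$ with $|k|<\Lambda$, polarizations $\lambda\in\{1,2\}$. $\mathcal F$ is the photon Fock space with $[a_\lambda(k),a^*_{\lambda'}(k')]=\delta_{\lambda\lambda'}\delta(k,k')$, all other pairs commuting, and $H_f=\sum_{|k|<\Lambda}\sum_{\lambda}|k|\,a^*_\lambda(k)a_\lambda(k)$. *)

theory Defs
  imports "HOL-Analysis.Analysis"
begin

text \<open>A mode is a pair (k, polarization) with k in R^3 and polarization in {1,2}.\<close>
type_synonym mode = "(real^3) \<times> nat"
text \<open>Occupation-number configurations and Fock-space vectors in the occupation-number basis.\<close>
type_synonym config = "mode \<Rightarrow> nat"
type_synonym fock = "config \<Rightarrow> complex"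

definition modes :: "real \<Rightarrow> real \<Rightarrow> mode set" where
  "modes L \<Lambda> = {(k, l). (\<forall>i. \<exists>z::int. k $ i = 2 * pi / L * of_int z) \<and> norm k < \<Lambda> \<and> l \<in> {1, 2}}"

text \<open>Finite-particle vectors of the photon Fock space over the modes (form core).\<close>
definition fock_dom :: "real \<Rightarrow> real \<Rightarrow> fock set" where
  "fock_dom L \<Lambda> = {\<psi>. finite {n. \<psi> n \<noteq> 0} \<and>
      (\<forall>n. \<psi> n \<noteq> 0 \<longrightarrow> (\<forall>m. m \<notin> modes L \<Lambda> \<longrightarrow> n m = 0))}"

definition ann :: "mode \<Rightarrow> fock \<Rightarrow> fock" where
  "ann m \<psi> = (\<lambda>n. complex_of_real (sqrt (real (n m + 1))) * \<psi> (n(m := n m + 1)))"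

definition cre :: "mode \<Rightarrow> fock \<Rightarrow> fock" where
  "cre m \<psi> = (\<lambda>n. if n m = 0 then 0
                   else complex_of_real (sqrt (real (n m))) * \<psi> (n(m := n m - 1)))"

definition fock_inner :: "fock \<Rightarrow> fock \<Rightarrow> complex" where
  "fock_inner \<phi> \<psi> = infsum (\<lambda>n. cnj (\<phi> n) * \<psi> n) UNIV"

definition Hf :: "real \<Rightarrow> real \<Rightarrow> fock \<Rightarrow> fock" where
  "Hf L \<Lambda> \<psi> = (\<lambda>n. \<Sum>m\<in>modes L \<Lambda>. complex_of_real (norm (fst m)) * cre m (ann m \<psi>) n)"

text \<open>L(y) and its adjoint L^*(y); volume V = L^3.\<close>
definition Lop :: "real \<Rightarrow> real \<Rightarrow> (mode \<Rightarrow> complex) \<Rightarrow> real^3 \<Rightarrow> fock \<Rightarrow> fock" where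
  "Lop L \<Lambda> v y \<psi> = (\<lambda>n. complex_of_real (1 / sqrt (2 * L^3)) *
      (\<Sum>m\<in>modes L \<Lambda>. complex_of_real (sqrt (norm (fst m))) * cnj (v m) * cis (fst m \<bullet> y) * ann m \<psi> n))"

definition Lstar :: "real \<Rightarrow> real \<Rightarrow> (mode \<Rightarrow> complex) \<Rightarrow> real^3 \<Rightarrow> fock \<Rightarrow> fock" where
  "Lstar L \<Lambda> v y \<psi> = (\<lambda>n. complex_of_real (1 / sqrt (2 * L^3)) *
      (\<Sum>m\<in>modes L \<Lambda>. complex_of_real (sqrt (norm (fst m))) * v m * cis (- (fst m \<bullet> y)) * cre m \<psi> n))"

definition phi_plus :: "real \<Rightarrow> real \<Rightarrow> (mode \<Rightarrow> complex) \<Rightarrow> real^3 \<Rightarrow> fock \<Rightarrow> fock" where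
  "phi_plus L \<Lambda> v y \<psi> = (\<lambda>n. Lop L \<Lambda> v y \<psi> n + Lstar L \<Lambda> v y \<psi> n)"

definition phi_minus :: "real \<Rightarrow> real \<Rightarrow> (mode \<Rightarrow> complex) \<Rightarrow> real^3 \<Rightarrow> fock \<Rightarrow> fock" where
  "phi_minus L \<Lambda> v y \<psi> = (\<lambda>n. Lop L \<Lambda> v y \<psi> n - Lstar L \<Lambda> v y \<psi> n)"

definition fourier :: "(real^3 \<Rightarrow> real) \<Rightarrow> real^3 \<Rightarrow> complex" where
  "fourier w k = (LINT x|lborel. cis (k \<bullet> x) * complex_of_real (w x))"

end

theory Submission
  imports Defs
begin

definition supp :: "fock \<Rightarrow> config set" where "supp \<psi> = {n. \<psi> n \<noteq> 0}"

lemma inner_sum_left: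
  assumes "finite F" "\<And>n. n \<notin> F \<Longrightarrow> a n = 0"
  shows "fock_inner a b = (\<Sum>n\<in>F. cnj (a n) * b n)"
proof -
  have "fock_inner a b = infsum (\<lambda>n. cnj (a n) * b n) F"
    unfolding fock_inner_def by (rule infsum_cong_neutral) (use assms in auto)
  also have "\<dots> = (\<Sum>n\<in>F. cnj (a n) * b n)" using assms(1) by (rule infsum_finite)
  finally show ?thesis .
qed

lemma inner_sum_right:
  assumes "finite F" "\<And>n. n \<notin> F \<Longrightarrow> b n = 0"
  shows "fock_inner a b = (\<Sum>n\<in>F. cnj (a n) * b n)"
proof -
  have "fock_inner a b = infsum (\<lambda>n. cnj (a n) * b n) F"
    unfolding fock_inner_def by (rule infsum_cong_neutral) (use assms in auto)
  also have "\<dots> = (\<Sum>n\<in>F. cnj (a n) * b n)" using assms(1) by (rule infsum_finite)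
  finally show ?thesis .
qed

lemma inner_supp: "finite (supp a) \<Longrightarrow> fock_inner a b = (\<Sum>n\<in>supp a. cnj (a n) * b n)"
  by (rule inner_sum_left) (auto simp: supp_def)

lemma inner_sym: "finite (supp a) \<Longrightarrow> fock_inner b a = cnj (fock_inner a b)"
proof -
  assume f: "finite (supp a)"
  have "fock_inner b a = (\<Sum>n\<in>supp a. cnj (b n) * a n)"
    by (rule inner_sum_right) (use f in \<open>auto simp: supp_def\<close>)
  then show ?thesis using f by (simp add: inner_supp mult.commute)
qed

lemma inj_up: "inj (\<lambda>n::config. n(m := n m + 1))"
proof (rule injI)
  fix x y :: config assume h: "x(m := x m + 1) = y(m := y m + 1)"
  show "x = y"
  proof
    fix z show "x z = y z" using fun_cong[OF h, of z] by (cases "z = m") auto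
  qed
qed

lemma inj_down: "inj_on (\<lambda>n::config. n(m := n m - 1)) {n. n m > 0}"
proof (rule inj_onI)
  fix x y :: config assume h: "x(m := x m - 1) = y(m := y m - 1)" and "x \<in> {n. n m > 0}" "y \<in> {n. n m > 0}"
  then show "x = y"
  proof -
    show "x = y"
    proof
      fix z show "x z = y z" using fun_cong[OF h, of z] \<open>x \<in> _\<close> \<open>y \<in> _\<close> by (cases "z = m") auto
    qed
  qed
qed

lemma fin_ann: "finite (supp \<psi>) \<Longrightarrow> finite (supp (ann m \<psi>))"
proof -
  assume f: "finite (supp \<psi>)"
  have "supp (ann m \<psi>) \<subseteq> (\<lambda>n. n(m := n m + 1)) -` supp \<psi>"
    by (auto simp: supp_def ann_def)
  moreover have "finite ((\<lambda>n. n(m := n m + 1)) -` supp \<psi>)"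
    using f inj_up by (rule finite_vimageI)
  ultimately show ?thesis by (rule finite_subset)
qed

lemma fin_cre: "finite (supp \<psi>) \<Longrightarrow> finite (supp (cre m \<psi>))"
proof -
  assume f: "finite (supp \<psi>)"
  have "supp (cre m \<psi>) \<subseteq> (\<lambda>n. n(m := n m - 1)) -` supp \<psi> \<inter> {n. n m > 0}"
    by (auto simp: supp_def cre_def split: if_splits)
  moreover have "finite ((\<lambda>n. n(m := n m - 1)) -` supp \<psi> \<inter> {n. n m > 0})"
    using f inj_down by (rule finite_vimage_IntI)
  ultimately show ?thesis by (rule finite_subset)
qed

lemma fin_lin:
  assumes "finite M" "\<And>m. m \<in> M \<Longrightarrow> finite (supp (T m))"
  shows "finite (supp (\<lambda>n. c * (\<Sum>m\<in>M. a m * T m n)))"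
proof -
  have "supp (\<lambda>n. c * (\<Sum>m\<in>M. a m * T m n)) \<subseteq> (\<Union>m\<in>M. supp (T m))"
  proof
    fix n assume "n \<in> supp (\<lambda>n. c * (\<Sum>m\<in>M. a m * T m n))"
    then have "(\<Sum>m\<in>M. a m * T m n) \<noteq> 0" by (auto simp: supp_def)
    then obtain m where "m \<in> M" "a m * T m n \<noteq> 0" by (meson sum.neutral)
    then show "n \<in> (\<Union>m\<in>M. supp (T m))" by (auto simp: supp_def)
  qed
  moreover have "finite (\<Union>m\<in>M. supp (T m))" using assms by auto
  ultimately show ?thesis by (rule finite_subset)
qed

lemma fin_add: "finite (supp a) \<Longrightarrow> finite (supp b) \<Longrightarrow> finite (supp (\<lambda>n. a n + b n))"
  by (rule finite_subset[of _ "supp a \<union> supp b"]) (auto simp: supp_def)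

lemma fin_diff: "finite (supp a) \<Longrightarrow> finite (supp b) \<Longrightarrow> finite (supp (\<lambda>n. a n - b n))"
  by (rule finite_subset[of _ "supp a \<union> supp b"]) (auto simp: supp_def)

lemma adj1:
  assumes f: "finite (supp u)"
  shows "fock_inner u (ann m \<psi>) = fock_inner (cre m u) \<psi>"
proof -
  define g where "g = (\<lambda>n::config. n(m := n m + 1))"
  have "fock_inner (cre m u) \<psi> = (\<Sum>n\<in>g ` supp u. cnj (cre m u n) * \<psi> n)"
  proof (rule inner_sum_left)
    show "finite (g ` supp u)" using f by simp
    fix n assume "n \<notin> g ` supp u"
    show "cre m u n = 0"
    proof (rule ccontr)
      assume "cre m u n \<noteq> 0"
      then have "n m \<noteq> 0" "u (n(m := n m - 1)) \<noteq> 0" by (auto simp: cre_def split: if_splits)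
      then have "n(m := n m - 1) \<in> supp u" "g (n(m := n m - 1)) = n" by (auto simp: supp_def g_def)
      then show False using \<open>n \<notin> g ` supp u\<close> by (metis image_eqI)
    qed
  qed
  also have "\<dots> = (\<Sum>n\<in>supp u. cnj (cre m u (g n)) * \<psi> (g n))"
    by (subst sum.reindex) (use inj_up[of m] in \<open>auto simp: g_def intro: inj_on_subset\<close>)
  also have "\<dots> = (\<Sum>n\<in>supp u. cnj (u n) * ann m \<psi> n)"
    by (rule sum.cong) (auto simp: g_def cre_def ann_def)
  also have "\<dots> = fock_inner u (ann m \<psi>)" using f by (simp add: inner_supp)
  finally show ?thesis by simp
qed

lemma adj2:
  assumes "finite (supp u)" "finite (supp \<psi>)"
  shows "fock_inner u (cre m \<psi>) = fock_inner (ann m u) \<psi>"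
proof -
  have "fock_inner u (cre m \<psi>) = cnj (fock_inner (cre m \<psi>) u)"
    using assms fin_cre by (simp add: inner_sym[of "cre m \<psi>"])
  also have "\<dots> = cnj (fock_inner \<psi> (ann m u))" using assms by (simp add: adj1)
  also have "\<dots> = fock_inner (ann m u) \<psi>" using assms by (simp add: inner_sym)
  finally show ?thesis .
qed

lemma inner_lin_right:
  assumes "finite (supp a)"
  shows "fock_inner a (\<lambda>n. c * (\<Sum>m\<in>M. f m * T m n)) = c * (\<Sum>m\<in>M. f m * fock_inner a (T m))"
  using assms
  by (simp add: inner_supp sum_distrib_left sum_distrib_right mult_ac sum.swap[of _ "supp a"])

lemma inner_add_right: "finite (supp a) \<Longrightarrow> fock_inner a (\<lambda>n. b n + c n) = fock_inner a b + fock_inner a c"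
  by (simp add: inner_supp distrib_left sum.distrib)

lemma inner_diff_right: "finite (supp a) \<Longrightarrow> fock_inner a (\<lambda>n. b n - c n) = fock_inner a b - fock_inner a c"
  by (simp add: inner_supp right_diff_distrib sum_subtractf)


lemma sqrt_sq_c: "complex_of_real (sqrt (real k)) * complex_of_real (sqrt (real k)) = of_nat k"
  by (simp flip: of_real_mult)
lemma sqrt_sq_r: "0 \<le> x \<Longrightarrow> complex_of_real (sqrt x) * complex_of_real (sqrt x) = complex_of_real x"
  by (simp flip: of_real_mult)

lemma ccr_point:
  "ann m (cre m' \<psi>) n = cre m' (ann m \<psi>) n + (if m = m' then \<psi> n else 0)"
proof (cases "m = m'")
  case True
  show ?thesis
  proof (cases "n m = 0")
    case True
    then show ?thesis using \<open>m = m'\<close> by (simp add: ann_def cre_def sqrt_sq_c)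
  next
    case False
    have e: "n(m := n m - 1 + 1) = n" using False by simp
    have "ann m (cre m \<psi>) n = of_nat (n m + 1) * \<psi> n"
      by (simp add: ann_def cre_def sqrt_sq_r mult.assoc[symmetric])
    moreover have "cre m (ann m \<psi>) n = of_nat (n m) * \<psi> n"
      using False e by (simp add: ann_def cre_def mult.assoc[symmetric] sqrt_sq_r )
    ultimately show ?thesis using \<open>m = m'\<close> by (simp add: algebra_simps)
  qed
next
  case False
  have tw: "n(m := Suc (n m), m' := n m' - Suc 0) = n(m' := n m' - Suc 0, m := Suc (n m))"
    using False by (simp add: fun_upd_twist)
  show ?thesis using False tw by (simp add: ann_def cre_def)
qed
lemma ccr_gen:
  assumes "finite M"
  shows "(\<Sum>m\<in>M. \<alpha> m * ann m (\<lambda>p. \<Sum>m'\<in>M. \<beta> m' * cre m' \<psi> p) n)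
       = (\<Sum>m'\<in>M. \<beta> m' * cre m' (\<lambda>p. \<Sum>m\<in>M. \<alpha> m * ann m \<psi> p) n) + (\<Sum>m\<in>M. \<alpha> m * \<beta> m) * \<psi> n"
proof -
  have a: "ann m (\<lambda>p. \<Sum>m'\<in>M. \<beta> m' * cre m' \<psi> p) n = (\<Sum>m'\<in>M. \<beta> m' * ann m (cre m' \<psi>) n)" for m
    by (simp add: ann_def sum_distrib_left mult_ac)
  have c: "cre m' (\<lambda>p. \<Sum>m\<in>M. \<alpha> m * ann m \<psi> p) n = (\<Sum>m\<in>M. \<alpha> m * cre m' (ann m \<psi>) n)" for m'
    by (simp add: cre_def sum_distrib_left mult_ac)
  have "(\<Sum>m\<in>M. \<alpha> m * ann m (\<lambda>p. \<Sum>m'\<in>M. \<beta> m' * cre m' \<psi> p) n)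
      = (\<Sum>m\<in>M. \<Sum>m'\<in>M. \<alpha> m * \<beta> m' * cre m' (ann m \<psi>) n + (if m = m' then \<alpha> m * \<beta> m' * \<psi> n else 0))"
    unfolding a sum_distrib_left
    by (intro sum.cong refl, subst ccr_point, cases "m = m'") (simp_all add: distrib_left mult.assoc)
  also have "\<dots> = (\<Sum>m\<in>M. \<Sum>m'\<in>M. \<alpha> m * \<beta> m' * cre m' (ann m \<psi>) n) + (\<Sum>m\<in>M. \<alpha> m * \<beta> m * \<psi> n)"
    using assms by (simp add: sum.distrib)
  also have "(\<Sum>m\<in>M. \<Sum>m'\<in>M. \<alpha> m * \<beta> m' * cre m' (ann m \<psi>) n)
       = (\<Sum>m'\<in>M. \<beta> m' * cre m' (\<lambda>p. \<Sum>m\<in>M. \<alpha> m * ann m \<psi> p) n)"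
  proof -
    have eq: "(\<Sum>m'\<in>M. \<beta> m' * cre m' (\<lambda>p. \<Sum>m\<in>M. \<alpha> m * ann m \<psi> p) n)
       = (\<Sum>m'\<in>M. \<Sum>m\<in>M. \<alpha> m * \<beta> m' * cre m' (ann m \<psi>) n)"
      unfolding c sum_distrib_left by (simp add: mult_ac)
    show ?thesis unfolding eq by (rule sum.swap)
  qed
  finally show ?thesis by (metis (no_types) sum_distrib_right)
qed

lemma ann_scale: "ann m (\<lambda>p. c * f p) n = c * ann m f n"
  by (simp add: ann_def mult_ac)
lemma cre_scale: "cre m (\<lambda>p. c * f p) n = c * cre m f n"
  by (simp add: cre_def mult_ac)

definition Cc :: "real \<Rightarrow> complex" where "Cc L = complex_of_real (1 / sqrt (2 * L^3))"
definition al :: "(mode \<Rightarrow> complex) \<Rightarrow> real^3 \<Rightarrow> mode \<Rightarrow> complex" where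
  "al v y m = complex_of_real (sqrt (norm (fst m))) * cnj (v m) * cis (fst m \<bullet> y)"
definition be :: "(mode \<Rightarrow> complex) \<Rightarrow> real^3 \<Rightarrow> mode \<Rightarrow> complex" where
  "be v y m = complex_of_real (sqrt (norm (fst m))) * v m * cis (- (fst m \<bullet> y))"

lemma Lop_eq: "Lop L \<Lambda> v y \<psi> = (\<lambda>n. Cc L * (\<Sum>m\<in>modes L \<Lambda>. al v y m * ann m \<psi> n))"
  by (simp add: Lop_def Cc_def al_def)
lemma Lstar_eq: "Lstar L \<Lambda> v y \<psi> = (\<lambda>n. Cc L * (\<Sum>m\<in>modes L \<Lambda>. be v y m * cre m \<psi> n))"
  by (simp add: Lstar_def Cc_def be_def)

lemma al_be: "al v y m * be v y m = complex_of_real (norm (fst m) * (cmod (v m))^2)"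
proof -
  have "al v y m * be v y m = (complex_of_real (sqrt (norm (fst m))) * complex_of_real (sqrt (norm (fst m)))) * (v m * cnj (v m)) * (cis (fst m \<bullet> y) * cis (- (fst m \<bullet> y)))"
    by (simp only: al_def be_def mult_ac)
  also have "\<dots> = complex_of_real (norm (fst m)) * complex_of_real ((cmod (v m))^2)"
    by (simp only: cis_mult complex_norm_square[symmetric] sqrt_sq_r[OF norm_ge_zero]) simp
  finally show ?thesis by simp
qed

lemma cnj_be: "cnj (be v y m) = al v y m"
  by (simp add: al_def be_def cis_cnj)

lemma ccr_L:
  assumes "finite (modes L \<Lambda>)"
  shows "Lop L \<Lambda> v y (Lstar L \<Lambda> v y \<psi>) n = Lstar L \<Lambda> v y (Lop L \<Lambda> v y \<psi>) n
     + Cc L * Cc L * (\<Sum>m\<in>modes L \<Lambda>. complex_of_real (norm (fst m) * (cmod (v m))^2)) * \<psi> n"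
proof -
  have 1: "Lop L \<Lambda> v y (Lstar L \<Lambda> v y \<psi>) n = Cc L * Cc L * (\<Sum>m\<in>modes L \<Lambda>. al v y m * ann m (\<lambda>p. \<Sum>m'\<in>modes L \<Lambda>. be v y m' * cre m' \<psi> p) n)"
    by (simp only: Lop_eq Lstar_eq ann_scale) (simp add: sum_distrib_left mult_ac)
  have 2: "Lstar L \<Lambda> v y (Lop L \<Lambda> v y \<psi>) n = Cc L * Cc L * (\<Sum>m'\<in>modes L \<Lambda>. be v y m' * cre m' (\<lambda>p. \<Sum>m\<in>modes L \<Lambda>. al v y m * ann m \<psi> p) n)"
    by (simp only: Lop_eq Lstar_eq cre_scale) (simp add: sum_distrib_left mult_ac)
  show ?thesis unfolding 1 2 ccr_gen[OF assms] al_be by (simp add: algebra_simps)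
qed
definition nrm2 :: "fock \<Rightarrow> real" where "nrm2 x = Re (fock_inner x x)"

lemma fin_Lop: "finite (modes L \<Lambda>) \<Longrightarrow> finite (supp \<psi>) \<Longrightarrow> finite (supp (Lop L \<Lambda> v y \<psi>))"
  unfolding Lop_eq by (rule fin_lin) (auto intro: fin_ann)
lemma fin_Lstar: "finite (modes L \<Lambda>) \<Longrightarrow> finite (supp \<psi>) \<Longrightarrow> finite (supp (Lstar L \<Lambda> v y \<psi>))"
  unfolding Lstar_eq by (rule fin_lin) (auto intro: fin_cre)

lemma cnj_Cc: "cnj (Cc L) = Cc L" by (simp add: Cc_def)

lemma adjL:
  assumes fm: "finite (modes L \<Lambda>)" and fu: "finite (supp u)" and fp: "finite (supp \<psi>)"
  shows "fock_inner u (Lop L \<Lambda> v y \<psi>) = fock_inner (Lstar L \<Lambda> v y u) \<psi>"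
proof -
  have "fock_inner u (Lop L \<Lambda> v y \<psi>) = Cc L * (\<Sum>m\<in>modes L \<Lambda>. al v y m * fock_inner (cre m u) \<psi>)"
    unfolding Lop_eq using fu by (simp add: inner_lin_right adj1)
  moreover have "fock_inner (Lstar L \<Lambda> v y u) \<psi> = cnj (fock_inner \<psi> (Lstar L \<Lambda> v y u))"
    using fp by (rule inner_sym)
  moreover have "fock_inner \<psi> (Lstar L \<Lambda> v y u) = Cc L * (\<Sum>m\<in>modes L \<Lambda>. be v y m * fock_inner \<psi> (cre m u))"
    unfolding Lstar_eq using fp by (simp add: inner_lin_right)
  moreover have "cnj (fock_inner \<psi> (cre m u)) = fock_inner (cre m u) \<psi>" for m
    using inner_sym[OF fp, of "cre m u"] by simp
  ultimately show ?thesis by (simp add: cnj_Cc cnj_be)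
qed

lemma adjLs:
  assumes fm: "finite (modes L \<Lambda>)" and fu: "finite (supp u)" and fp: "finite (supp \<psi>)"
  shows "fock_inner u (Lstar L \<Lambda> v y \<psi>) = fock_inner (Lop L \<Lambda> v y u) \<psi>"
proof -
  have "fock_inner u (Lstar L \<Lambda> v y \<psi>) = cnj (fock_inner (Lstar L \<Lambda> v y \<psi>) u)"
    using fin_Lstar[OF fm fp] by (rule inner_sym)
  also have "\<dots> = cnj (fock_inner \<psi> (Lop L \<Lambda> v y u))" using adjL[OF fm fp fu] by simp
  also have "\<dots> = fock_inner (Lop L \<Lambda> v y u) \<psi>" using inner_sym[OF fp] by simp
  finally show ?thesis .
qed

lemma inner_scale_right: "finite (supp a) \<Longrightarrow> fock_inner a (\<lambda>n. K * b n) = K * fock_inner a b"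
  by (simp add: inner_supp sum_distrib_left mult_ac)

lemma inner_add_left: "finite (supp c) \<Longrightarrow> fock_inner (\<lambda>n. a n + b n) c = fock_inner a c + fock_inner b c"
proof -
  assume f: "finite (supp c)"
  have h: "fock_inner x c = (\<Sum>n\<in>supp c. cnj (x n) * c n)" for x
    by (rule inner_sum_right) (use f in \<open>auto simp: supp_def\<close>)
  show ?thesis unfolding h by (simp add: distrib_right sum.distrib)
qed

lemma inner_diff_left: "finite (supp c) \<Longrightarrow> fock_inner (\<lambda>n. a n - b n) c = fock_inner a c - fock_inner b c"
proof -
  assume f: "finite (supp c)"
  have h: "fock_inner x c = (\<Sum>n\<in>supp c. cnj (x n) * c n)" for x
    by (rule inner_sum_right) (use f in \<open>auto simp: supp_def\<close>)
  show ?thesis unfolding h by (simp add: left_diff_distrib sum_subtractf)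
qed

lemma Cc_sq: "L > 0 \<Longrightarrow> Cc L * Cc L = complex_of_real (1 / (2 * L^3))"
proof -
  assume "L > 0"
  then have p: "2 * L^3 > 0" by simp
  have "Cc L * Cc L = complex_of_real ((1 / sqrt (2 * L^3)) * (1 / sqrt (2 * L^3)))"
    by (simp only: Cc_def of_real_mult)
  also have "(1 / sqrt (2 * L^3)) * (1 / sqrt (2 * L^3)) = 1 / (sqrt (2 * L^3) * sqrt (2 * L^3))"
    by simp
  also have "sqrt (2 * L^3) * sqrt (2 * L^3) = 2 * L^3"
    using p by simp
  finally show ?thesis .
qed

definition cconst :: "real \<Rightarrow> real \<Rightarrow> (mode \<Rightarrow> complex) \<Rightarrow> real" where
  "cconst L \<Lambda> v = (\<Sum>m\<in>modes L \<Lambda>. norm (fst m) * (cmod (v m))^2) / (2 * L^3)"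

lemma norm_Lstar:
  assumes L: "L > 0" and fm: "finite (modes L \<Lambda>)" and fp: "finite (supp \<psi>)"
  shows "nrm2 (Lstar L \<Lambda> v y \<psi>) = nrm2 (Lop L \<Lambda> v y \<psi>) + cconst L \<Lambda> v * nrm2 \<psi>"
proof -
  define K where "K = Cc L * Cc L * (\<Sum>m\<in>modes L \<Lambda>. complex_of_real (norm (fst m) * (cmod (v m))^2))"
  have K: "K = complex_of_real (cconst L \<Lambda> v)"
    unfolding K_def cconst_def Cc_sq[OF L] by simp
  have e: "Lop L \<Lambda> v y (Lstar L \<Lambda> v y \<psi>) = (\<lambda>n. Lstar L \<Lambda> v y (Lop L \<Lambda> v y \<psi>) n + K * \<psi> n)"
    using ccr_L[OF fm] unfolding K_def by auto
  have "fock_inner (Lstar L \<Lambda> v y \<psi>) (Lstar L \<Lambda> v y \<psi>) = fock_inner \<psi> (Lop L \<Lambda> v y (Lstar L \<Lambda> v y \<psi>))"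
    using adjL[OF fm fp fin_Lstar[OF fm fp]] by simp
  also have "\<dots> = fock_inner \<psi> (Lstar L \<Lambda> v y (Lop L \<Lambda> v y \<psi>)) + K * fock_inner \<psi> \<psi>"
    unfolding e using fp by (simp add: inner_add_right inner_scale_right)
  also have "fock_inner \<psi> (Lstar L \<Lambda> v y (Lop L \<Lambda> v y \<psi>)) = fock_inner (Lop L \<Lambda> v y \<psi>) (Lop L \<Lambda> v y \<psi>)"
    using adjLs[OF fm fp fin_Lop[OF fm fp]] .
  finally show ?thesis unfolding nrm2_def K by simp
qed

lemma nrm2_sum:
  assumes "finite F" "\<And>n. n \<notin> F \<Longrightarrow> x n = 0"
  shows "nrm2 x = (\<Sum>n\<in>F. (cmod (x n))^2)"
proof -
  have "nrm2 x = Re (\<Sum>n\<in>F. cnj (x n) * x n)" unfolding nrm2_def using inner_sum_left[OF assms] by simp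
  also have "\<dots> = (\<Sum>n\<in>F. (cmod (x n))^2)"
  proof -
    have "cnj z * z = complex_of_real ((cmod z)^2)" for z
      by (metis complex_norm_square mult.commute)
    then show ?thesis by simp
  qed
  finally show ?thesis .
qed

lemma nrm2_nonneg: "finite (supp x) \<Longrightarrow> nrm2 x \<ge> 0"
  by (subst nrm2_sum[of "supp x"]) (auto simp: supp_def intro: sum_nonneg)

lemma sq_tri: "(cmod (a + b))^2 \<le> 2 * (cmod a)^2 + 2 * (cmod b)^2"
proof -
  have "cmod (a + b) \<le> cmod a + cmod b" by (rule norm_triangle_ineq)
  then have "(cmod (a + b))^2 \<le> (cmod a + cmod b)^2" by (simp add: power_mono)
  also have "\<dots> \<le> 2 * (cmod a)^2 + 2 * (cmod b)^2" 
  proof -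
    have "0 \<le> (cmod a - cmod b)^2" by simp
    then show ?thesis unfolding power2_sum power2_diff by linarith
  qed
  finally show ?thesis .
qed

lemma para:
  assumes "finite (supp a)" "finite (supp b)"
  shows "nrm2 (\<lambda>n. a n + b n) \<le> 2 * nrm2 a + 2 * nrm2 b"
        "nrm2 (\<lambda>n. a n - b n) \<le> 2 * nrm2 a + 2 * nrm2 b"
proof -
  define F where "F = supp a \<union> supp b"
  have f: "finite F" using assms by (simp add: F_def)
  have z: "n \<notin> F \<Longrightarrow> a n = 0 \<and> b n = 0" for n by (auto simp: F_def supp_def)
  have na: "nrm2 a = (\<Sum>n\<in>F. (cmod (a n))^2)" by (rule nrm2_sum) (use f z in auto)
  have nb: "nrm2 b = (\<Sum>n\<in>F. (cmod (b n))^2)" by (rule nrm2_sum) (use f z in auto)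
  have "nrm2 (\<lambda>n. a n + b n) = (\<Sum>n\<in>F. (cmod (a n + b n))^2)" by (rule nrm2_sum) (use f z in auto)
  also have "\<dots> \<le> (\<Sum>n\<in>F. 2 * (cmod (a n))^2 + 2 * (cmod (b n))^2)" by (rule sum_mono) (rule sq_tri)
  finally show "nrm2 (\<lambda>n. a n + b n) \<le> 2 * nrm2 a + 2 * nrm2 b"
    unfolding na nb by (simp add: sum.distrib sum_distrib_left)
  have "nrm2 (\<lambda>n. a n - b n) = (\<Sum>n\<in>F. (cmod (a n - b n))^2)" by (rule nrm2_sum) (use f z in auto)
  also have "\<dots> = (\<Sum>n\<in>F. (cmod (a n + (- b n)))^2)" by simp
  also have "\<dots> \<le> (\<Sum>n\<in>F. 2 * (cmod (a n))^2 + 2 * (cmod (- b n))^2)" by (rule sum_mono) (rule sq_tri)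
  finally show "nrm2 (\<lambda>n. a n - b n) \<le> 2 * nrm2 a + 2 * nrm2 b"
    unfolding na nb by (simp add: sum.distrib sum_distrib_left)
qed


lemma phi_plus_bound:
  assumes L: "L > 0" and fm: "finite (modes L \<Lambda>)" and fp: "finite (supp \<psi>)"
  shows "Re (fock_inner \<psi> (phi_plus L \<Lambda> v y (phi_plus L \<Lambda> v y \<psi>)))
         \<le> 4 * nrm2 (Lop L \<Lambda> v y \<psi>) + 2 * cconst L \<Lambda> v * nrm2 \<psi>"
proof -
  define X where "X = phi_plus L \<Lambda> v y \<psi>"
  have X: "X = (\<lambda>n. Lop L \<Lambda> v y \<psi> n + Lstar L \<Lambda> v y \<psi> n)" by (simp add: X_def phi_plus_def)
  have fX: "finite (supp X)" unfolding X by (intro fin_add fin_Lop fin_Lstar fm fp)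
  have "fock_inner \<psi> (phi_plus L \<Lambda> v y X) = fock_inner \<psi> (Lop L \<Lambda> v y X) + fock_inner \<psi> (Lstar L \<Lambda> v y X)"
    unfolding phi_plus_def using fp by (rule inner_add_right)
  also have "\<dots> = fock_inner (Lstar L \<Lambda> v y \<psi>) X + fock_inner (Lop L \<Lambda> v y \<psi>) X"
    using adjL[OF fm fp fX] adjLs[OF fm fp fX] by simp
  also have "\<dots> = fock_inner X X"
  proof -
    have e: "(\<lambda>n. Lstar L \<Lambda> v y \<psi> n + Lop L \<Lambda> v y \<psi> n) = X" unfolding X by (simp add: add.commute)
    show ?thesis using inner_add_left[OF fX, of "Lstar L \<Lambda> v y \<psi>" "Lop L \<Lambda> v y \<psi>"] e by simp
  qed
  finally have "Re (fock_inner \<psi> (phi_plus L \<Lambda> v y X)) = nrm2 X" by (simp add: nrm2_def)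
  also have "\<dots> \<le> 2 * nrm2 (Lop L \<Lambda> v y \<psi>) + 2 * nrm2 (Lstar L \<Lambda> v y \<psi>)"
    unfolding X by (intro para fin_Lop fin_Lstar fm fp)
  also have "\<dots> = 4 * nrm2 (Lop L \<Lambda> v y \<psi>) + 2 * cconst L \<Lambda> v * nrm2 \<psi>"
    using norm_Lstar[OF L fm fp] by simp
  finally show ?thesis by (simp add: X_def)
qed

lemma phi_minus_bound:
  assumes L: "L > 0" and fm: "finite (modes L \<Lambda>)" and fp: "finite (supp \<psi>)"
  shows "- Re (fock_inner \<psi> (phi_minus L \<Lambda> v y (phi_minus L \<Lambda> v y \<psi>)))
         \<le> 4 * nrm2 (Lop L \<Lambda> v y \<psi>) + 2 * cconst L \<Lambda> v * nrm2 \<psi>"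
proof -
  define X where "X = phi_minus L \<Lambda> v y \<psi>"
  have X: "X = (\<lambda>n. Lop L \<Lambda> v y \<psi> n - Lstar L \<Lambda> v y \<psi> n)" by (simp add: X_def phi_minus_def)
  have fX: "finite (supp X)" unfolding X by (intro fin_diff fin_Lop fin_Lstar fm fp)
  have "fock_inner \<psi> (phi_minus L \<Lambda> v y X) = fock_inner \<psi> (Lop L \<Lambda> v y X) - fock_inner \<psi> (Lstar L \<Lambda> v y X)"
    unfolding phi_minus_def using fp by (rule inner_diff_right)
  also have "\<dots> = fock_inner (Lstar L \<Lambda> v y \<psi>) X - fock_inner (Lop L \<Lambda> v y \<psi>) X"
    using adjL[OF fm fp fX] adjLs[OF fm fp fX] by simp
  also have "\<dots> = - fock_inner X X"
  proof -
    have e: "(\<lambda>n. Lop L \<Lambda> v y \<psi> n - Lstar L \<Lambda> v y \<psi> n) = X" unfolding X by simp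
    show ?thesis using inner_diff_left[OF fX, of "Lop L \<Lambda> v y \<psi>" "Lstar L \<Lambda> v y \<psi>"] e by simp
  qed
  finally have "- Re (fock_inner \<psi> (phi_minus L \<Lambda> v y X)) = nrm2 X" by (simp add: nrm2_def)
  also have "\<dots> \<le> 2 * nrm2 (Lop L \<Lambda> v y \<psi>) + 2 * nrm2 (Lstar L \<Lambda> v y \<psi>)"
    unfolding X by (intro para fin_Lop fin_Lstar fm fp)
  also have "\<dots> = 4 * nrm2 (Lop L \<Lambda> v y \<psi>) + 2 * cconst L \<Lambda> v * nrm2 \<psi>"
    using norm_Lstar[OF L fm fp] by simp
  finally show ?thesis by (simp add: X_def)
qed

lemma g_int:
  fixes w :: "real^3 \<Rightarrow> real" and d :: "real^3"
  assumes w: "integrable lborel w"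
  shows "integrable lborel (\<lambda>y. cis (d \<bullet> y) * complex_of_real (w y))"
proof (rule Bochner_Integration.integrable_bound[OF integrable_of_real[OF w]])
  have c: "(\<lambda>y::real^3. cis (d \<bullet> y)) \<in> borel_measurable borel"
    by (rule borel_measurable_continuous_onI) (intro continuous_intros)
  have wm: "w \<in> borel_measurable lborel" using w by (rule borel_measurable_integrable)
  show "(\<lambda>y. cis (d \<bullet> y) * complex_of_real (w y)) \<in> borel_measurable lborel"
    using c wm by measurable
  show "AE x in lborel. norm (cis (d \<bullet> x) * complex_of_real (w x)) \<le> norm (complex_of_real (w x) :: complex)"
    by (simp add: norm_mult)
qed

lemma re_int:
  fixes w :: "real^3 \<Rightarrow> real" and d :: "real^3"
  assumes w: "integrable lborel w"
  shows "integrable lborel (\<lambda>y. Re (z * (cis (d \<bullet> y) * complex_of_real (w y))))"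
    "(LINT y|lborel. Re (z * (cis (d \<bullet> y) * complex_of_real (w y)))) = Re (z * fourier w d)"
proof -
  have i: "integrable lborel (\<lambda>y. z * (cis (d \<bullet> y) * complex_of_real (w y)))"
    using g_int[OF w] by simp
  show "integrable lborel (\<lambda>y. Re (z * (cis (d \<bullet> y) * complex_of_real (w y))))"
    by (rule integrable_bounded_linear[OF bounded_linear_Re i])
  show "(LINT y|lborel. Re (z * (cis (d \<bullet> y) * complex_of_real (w y)))) = Re (z * fourier w d)"
    using integral_bounded_linear[OF bounded_linear_Re i] g_int[OF w] by (simp add: fourier_def)
qed

lemma sq_expand:
  fixes c :: complex
  shows "(cmod (c * (\<Sum>m\<in>M. e m * a m)))^2 = Re (\<Sum>m\<in>M. \<Sum>m'\<in>M. cnj c * c * (cnj (a m) * a m') * (cnj (e m) * e m'))"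
proof -
  have sq: "(cmod z)^2 = Re (cnj z * z)" for z :: complex
    by (metis complex_norm_square mult.commute Re_complex_of_real)
  have "cnj (c * (\<Sum>m\<in>M. e m * a m)) * (c * (\<Sum>m\<in>M. e m * a m))
      = cnj c * c * ((\<Sum>m\<in>M. cnj (e m) * cnj (a m)) * (\<Sum>m'\<in>M. e m' * a m'))"
    by (simp add: mult_ac)
  also have "\<dots> = (\<Sum>m\<in>M. \<Sum>m'\<in>M. cnj c * c * (cnj (a m) * a m') * (cnj (e m) * e m'))"
    by (simp add: sum_product sum_distrib_left mult_ac)
  finally show ?thesis unfolding sq by simp
qed


lemma cis_diff:
  fixes a b y :: "real^3"
  shows "cnj (cis (a \<bullet> y)) * cis (b \<bullet> y) = cis ((b - a) \<bullet> y)"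
proof -
  have "(b - a) \<bullet> y = b \<bullet> y - a \<bullet> y" by (rule Inner_Product.inner_diff_left)
  then show ?thesis by (simp add: cis_cnj cis_mult)
qed

lemma Re_mr: "Re (z * complex_of_real r) = r * Re z"
  by simp

lemma int_L:
  fixes w :: "real^3 \<Rightarrow> real"
  assumes L: "L > 0" and fm: "finite (modes L \<Lambda>)" and fp: "finite (supp \<psi>)"
    and w: "integrable lborel w"
    and vnz: "\<forall>m\<in>modes L \<Lambda>. v m \<noteq> 0"
    and hyp: "\<forall>f :: mode \<Rightarrow> complex.
           Re (\<Sum>m\<in>modes L \<Lambda>. \<Sum>m'\<in>modes L \<Lambda>.
                 cnj (f m) * f m' * fourier w (fst m - fst m') / complex_of_real (2 * L^3))
           \<le> (\<Sum>m\<in>modes L \<Lambda>. (cmod (f m))^2 / (cmod (v m))^2)"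
  shows "integrable lborel (\<lambda>y. w y * nrm2 (Lop L \<Lambda> v y \<psi>))"
    "(LINT y|lborel. w y * nrm2 (Lop L \<Lambda> v y \<psi>)) \<le> Re (fock_inner \<psi> (Hf L \<Lambda> \<psi>))"
proof -
  let ?M = "modes L \<Lambda>"
  define S where "S = (\<Union>m\<in>?M. supp (ann m \<psi>))"
  have fS: "finite S" using fm fp by (auto simp: S_def intro: fin_ann)
  define A where "A m n = complex_of_real (sqrt (norm (fst m))) * cnj (v m) * ann m \<psi> n" for m n
  define T where "T n m m' y = Re ((Cc L * Cc L * (cnj (A m n) * A m' n)) * (cis ((fst m' - fst m) \<bullet> y) * complex_of_real (w y)))" for n m m' y
  have Lop0: "Lop L \<Lambda> v y \<psi> n = 0" if "n \<notin> S" for y n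
  proof -
    have "ann m \<psi> n = 0" if "m \<in> ?M" for m using \<open>n \<notin> S\<close> that by (auto simp: S_def supp_def)
    then show ?thesis by (simp add: Lop_eq)
  qed
  have LopA: "Lop L \<Lambda> v y \<psi> n = Cc L * (\<Sum>m\<in>?M. cis (fst m \<bullet> y) * A m n)" for y n
    unfolding Lop_eq al_def A_def by (simp add: mult_ac)
  have pw: "w y * nrm2 (Lop L \<Lambda> v y \<psi>) = (\<Sum>n\<in>S. \<Sum>m\<in>?M. \<Sum>m'\<in>?M. T n m m' y)" for y
  proof -
    have "nrm2 (Lop L \<Lambda> v y \<psi>) = (\<Sum>n\<in>S. (cmod (Lop L \<Lambda> v y \<psi> n))^2)"
      by (rule nrm2_sum[OF fS]) (rule Lop0)
    also have "\<dots> = (\<Sum>n\<in>S. Re (\<Sum>m\<in>?M. \<Sum>m'\<in>?M. cnj (Cc L) * Cc L * (cnj (A m n) * A m' n) * (cnj (cis (fst m \<bullet> y)) * cis (fst m' \<bullet> y))))"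
      unfolding LopA sq_expand ..
    also have "\<dots> = (\<Sum>n\<in>S. Re (\<Sum>m\<in>?M. \<Sum>m'\<in>?M. Cc L * Cc L * (cnj (A m n) * A m' n) * cis ((fst m' - fst m) \<bullet> y)))"
      unfolding cis_diff cnj_Cc ..
    finally have "w y * nrm2 (Lop L \<Lambda> v y \<psi>) = w y * (\<Sum>n\<in>S. Re (\<Sum>m\<in>?M. \<Sum>m'\<in>?M. Cc L * Cc L * (cnj (A m n) * A m' n) * cis ((fst m' - fst m) \<bullet> y)))"
      by simp
    also have "\<dots> = (\<Sum>n\<in>S. \<Sum>m\<in>?M. \<Sum>m'\<in>?M. w y * Re (Cc L * Cc L * (cnj (A m n) * A m' n) * cis ((fst m' - fst m) \<bullet> y)))"
      by (simp only: Re_sum sum_distrib_left)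
    also have "\<dots> = (\<Sum>n\<in>S. \<Sum>m\<in>?M. \<Sum>m'\<in>?M. T n m m' y)"
      unfolding T_def by (intro sum.cong refl) (simp only: mult.assoc[symmetric] Re_mr)
    finally show ?thesis .
  qed
  have Tint: "integrable lborel (T n m m')"
    and Tval: "(LINT y|lborel. T n m m' y) = Re (Cc L * Cc L * (cnj (A m n) * A m' n) * fourier w (fst m' - fst m))" for n m m'
    unfolding T_def by (rule re_int(1)[OF w], rule re_int(2)[OF w])
  have pwf: "(\<lambda>y. w y * nrm2 (Lop L \<Lambda> v y \<psi>)) = (\<lambda>y. \<Sum>n\<in>S. \<Sum>m\<in>?M. \<Sum>m'\<in>?M. T n m m' y)"
    using pw by auto
  show "integrable lborel (\<lambda>y. w y * nrm2 (Lop L \<Lambda> v y \<psi>))"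
    unfolding pwf by (auto intro!: Bochner_Integration.integrable_sum Tint)
  have "(LINT y|lborel. w y * nrm2 (Lop L \<Lambda> v y \<psi>))
      = (\<Sum>n\<in>S. \<Sum>m\<in>?M. \<Sum>m'\<in>?M. Re (Cc L * Cc L * (cnj (A m n) * A m' n) * fourier w (fst m' - fst m)))"
    unfolding pwf by (simp add: Bochner_Integration.integral_sum Bochner_Integration.integrable_sum Tint Tval)
  also have "\<dots> \<le> (\<Sum>n\<in>S. \<Sum>m\<in>?M. norm (fst m) * (cmod (ann m \<psi> n))^2)"
  proof (rule sum_mono)
    fix n
    have h: "Re (\<Sum>m\<in>?M. \<Sum>m'\<in>?M. cnj (cnj (A m n)) * cnj (A m' n) * fourier w (fst m - fst m') / complex_of_real (2 * L^3))
        \<le> (\<Sum>m\<in>?M. (cmod (cnj (A m n)))^2 / (cmod (v m))^2)"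
      by (rule hyp[rule_format])
    have "(\<Sum>m\<in>?M. \<Sum>m'\<in>?M. Re (Cc L * Cc L * (cnj (A m n) * A m' n) * fourier w (fst m' - fst m)))
        = Re (\<Sum>m\<in>?M. \<Sum>m'\<in>?M. cnj (A m n) * A m' n * fourier w (fst m' - fst m) / complex_of_real (2 * L^3))"
      by (simp add: Cc_sq[OF L])
    also have "\<dots> = Re (\<Sum>m'\<in>?M. \<Sum>m\<in>?M. cnj (A m n) * A m' n * fourier w (fst m' - fst m) / complex_of_real (2 * L^3))"
      by (rule arg_cong[where f=Re], rule sum.swap)
    also have "\<dots> = Re (\<Sum>m\<in>?M. \<Sum>m'\<in>?M. cnj (cnj (A m n)) * cnj (A m' n) * fourier w (fst m - fst m') / complex_of_real (2 * L^3))"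
      by (simp add: mult_ac)
    finally have lhs: "(\<Sum>m\<in>?M. \<Sum>m'\<in>?M. Re (Cc L * Cc L * (cnj (A m n) * A m' n) * fourier w (fst m' - fst m)))
        = Re (\<Sum>m\<in>?M. \<Sum>m'\<in>?M. cnj (cnj (A m n)) * cnj (A m' n) * fourier w (fst m - fst m') / complex_of_real (2 * L^3))" .
    have rhs: "(\<Sum>m\<in>?M. (cmod (cnj (A m n)))^2 / (cmod (v m))^2) = (\<Sum>m\<in>?M. norm (fst m) * (cmod (ann m \<psi> n))^2)"
    proof (rule sum.cong[OF refl])
      fix m assume "m \<in> ?M"
      then have "cmod (v m) \<noteq> 0" using vnz by auto
      moreover have "(cmod (cnj (A m n)))^2 = norm (fst m) * (cmod (v m))^2 * (cmod (ann m \<psi> n))^2"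
        by (simp add: A_def norm_mult power_mult_distrib)
      ultimately show "(cmod (cnj (A m n)))^2 / (cmod (v m))^2 = norm (fst m) * (cmod (ann m \<psi> n))^2"
        by (simp add: field_simps)
    qed
    show "(\<Sum>m\<in>?M. \<Sum>m'\<in>?M. Re (Cc L * Cc L * (cnj (A m n) * A m' n) * fourier w (fst m' - fst m)))
        \<le> (\<Sum>m\<in>?M. norm (fst m) * (cmod (ann m \<psi> n))^2)"
      using h unfolding lhs rhs .
  qed
  also have "\<dots> = (\<Sum>m\<in>?M. \<Sum>n\<in>S. norm (fst m) * (cmod (ann m \<psi> n))^2)"
    by (rule sum.swap)
  also have "\<dots> = (\<Sum>m\<in>?M. norm (fst m) * nrm2 (ann m \<psi>))"
  proof (rule sum.cong[OF refl])
    fix m assume "m \<in> ?M"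
    then have "nrm2 (ann m \<psi>) = (\<Sum>n\<in>S. (cmod (ann m \<psi> n))^2)"
      by (intro nrm2_sum fS) (auto simp: S_def supp_def)
    then show "(\<Sum>n\<in>S. norm (fst m) * (cmod (ann m \<psi> n))^2) = norm (fst m) * nrm2 (ann m \<psi>)"
      by (simp add: sum_distrib_left)
  qed
  also have "\<dots> = Re (fock_inner \<psi> (Hf L \<Lambda> \<psi>))"
  proof -
    have "fock_inner \<psi> (Hf L \<Lambda> \<psi>) = (\<Sum>m\<in>?M. complex_of_real (norm (fst m)) * fock_inner \<psi> (cre m (ann m \<psi>)))"
      unfolding Hf_def using inner_lin_right[OF fp, of 1 "\<lambda>m. complex_of_real (norm (fst m))" "\<lambda>m. cre m (ann m \<psi>)" ?M] by simp
    also have "\<dots> = (\<Sum>m\<in>?M. complex_of_real (norm (fst m)) * fock_inner (ann m \<psi>) (ann m \<psi>))"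
      using adj2[OF fp fin_ann[OF fp]] by simp
    finally show ?thesis by (simp add: nrm2_def)
  qed
  finally show "(LINT y|lborel. w y * nrm2 (Lop L \<Lambda> v y \<psi>)) \<le> Re (fock_inner \<psi> (Hf L \<Lambda> \<psi>))" .
qed


lemma finite_modes:
  assumes L: "L > 0"
  shows "finite (modes L \<Lambda>)"
proof -
  define N where "N = \<lceil>\<Lambda> * L / (2 * pi)\<rceil>"
  define R where "R = (\<lambda>z::int. 2 * pi / L * of_int z) ` {-N..N}"
  have fR: "finite R" by (simp add: R_def)
  have sub1: "modes L \<Lambda> \<subseteq> {k::real^3. \<forall>i. k $ i \<in> R} \<times> {1, 2}"
  proof
    fix x assume "x \<in> modes L \<Lambda>"
    then obtain k l where x: "x = (k, l)" and h: "\<forall>i. \<exists>z::int. k $ i = 2 * pi / L * of_int z"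
      and nk: "norm k < \<Lambda>" and l: "l \<in> {1, 2}" by (auto simp: modes_def)
    have "k $ i \<in> R" for i
    proof -
      obtain z :: int where z: "k $ i = 2 * pi / L * of_int z" using h by blast
      have "\<bar>k $ i\<bar> < \<Lambda>" using component_le_norm_cart[of k i] nk by linarith
      then have "2 * pi / L * \<bar>of_int z\<bar> < \<Lambda>" using z L by (simp add: abs_mult)
      then have "\<bar>of_int z\<bar> < \<Lambda> * L / (2 * pi)" using L pi_gt_zero by (simp add: field_simps)
      then have "\<bar>z\<bar> \<le> N" unfolding N_def by linarith
      then have "z \<in> {-N..N}" by auto
      then show ?thesis unfolding R_def z by (rule imageI)
    qed
    then show "x \<in> {k::real^3. \<forall>i. k $ i \<in> R} \<times> {1, 2}" using x l by auto
  qed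
  have sub2: "{k::real^3. \<forall>i. k $ i \<in> R} \<subseteq> vec_lambda ` (PiE UNIV (\<lambda>_. R))"
  proof
    fix k :: "real^3" assume "k \<in> {k. \<forall>i. k $ i \<in> R}"
    then have "(\<lambda>i. k $ i) \<in> PiE UNIV (\<lambda>_. R)" by auto
    moreover have "k = vec_lambda (\<lambda>i. k $ i)" by simp
    ultimately show "k \<in> vec_lambda ` (PiE UNIV (\<lambda>_. R))" by blast
  qed
  have "finite (vec_lambda ` (PiE (UNIV :: 3 set) (\<lambda>_. R)))"
    using fR by (intro finite_imageI finite_PiE) auto
  then have "finite {k::real^3. \<forall>i. k $ i \<in> R}" using sub2 finite_subset by blast
  then show ?thesis using sub1 finite_subset by blast
qed

theorem corollary1:
  fixes L :: real and \<Lambda> :: real and v :: "mode \<Rightarrow> complex" and w :: "real^3 \<Rightarrow> real"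
  assumes "L > 0"
    and "\<forall>m\<in>modes L \<Lambda>. v m \<noteq> 0"
    and "\<forall>x. w x \<ge> 0"
    and "integrable lborel w"
    and "\<forall>f :: mode \<Rightarrow> complex.
           Re (\<Sum>m\<in>modes L \<Lambda>. \<Sum>m'\<in>modes L \<Lambda>.
                 cnj (f m) * f m' * fourier w (fst m - fst m') / complex_of_real (2 * L^3))
           \<le> (\<Sum>m\<in>modes L \<Lambda>. (cmod (f m))^2 / (cmod (v m))^2)"
  shows "\<forall>\<psi>\<in>fock_dom L \<Lambda>.
           Re (fock_inner \<psi> (Hf L \<Lambda> \<psi>)) \<ge>
             - ((\<Sum>m\<in>modes L \<Lambda>. norm (fst m) * (cmod (v m))^2) / (2 * L^3))
               * (LINT y|lborel. w y) * Re (fock_inner \<psi> \<psi>)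
             + 1/4 * (LINT y|lborel. w y * Re (fock_inner \<psi> (phi_plus L \<Lambda> v y (phi_plus L \<Lambda> v y \<psi>))))
         \<and> Re (fock_inner \<psi> (Hf L \<Lambda> \<psi>)) \<ge>
             - ((\<Sum>m\<in>modes L \<Lambda>. norm (fst m) * (cmod (v m))^2) / (2 * L^3))
               * (LINT y|lborel. w y) * Re (fock_inner \<psi> \<psi>)
             - 1/4 * (LINT y|lborel. w y * Re (fock_inner \<psi> (phi_minus L \<Lambda> v y (phi_minus L \<Lambda> v y \<psi>))))"
proof
  fix \<psi> assume "\<psi> \<in> fock_dom L \<Lambda>"
  then have fp: "finite (supp \<psi>)" by (simp add: fock_dom_def supp_def)
  note L = assms(1) and vnz = assms(2) and wpos = assms(3) and w = assms(4) and hyp = assms(5)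
  have fm: "finite (modes L \<Lambda>)" using L by (rule finite_modes)
  define c where "c = cconst L \<Lambda> v"
  define I where "I = (LINT y|lborel. w y)"
  define N where "N = nrm2 \<psi>"
  define H where "H = Re (fock_inner \<psi> (Hf L \<Lambda> \<psi>))"
  define J where "J = (LINT y|lborel. w y * nrm2 (Lop L \<Lambda> v y \<psi>))"
  have cdef: "(\<Sum>m\<in>modes L \<Lambda>. norm (fst m) * (cmod (v m))^2) / (2 * L^3) = c"
    by (simp add: c_def cconst_def)
  have Ndef: "Re (fock_inner \<psi> \<psi>) = N" by (simp add: N_def nrm2_def)
  have c0: "c \<ge> 0" unfolding c_def cconst_def using L by (auto intro!: divide_nonneg_pos sum_nonneg)
  have I0: "I \<ge> 0" unfolding I_def using wpos by (simp add: integral_nonneg)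
  have N0: "N \<ge> 0" unfolding N_def using fp by (rule nrm2_nonneg)
  have i1: "integrable lborel (\<lambda>y. w y * nrm2 (Lop L \<Lambda> v y \<psi>))"
    using int_L(1)[OF L fm fp w vnz hyp] .
  have JH: "J \<le> H" unfolding J_def H_def using int_L(2)[OF L fm fp w vnz hyp] .
  have J0: "J \<ge> 0" unfolding J_def
    using wpos nrm2_nonneg[OF fin_Lop[OF fm fp]] by (simp add: integral_nonneg)
  have i2: "integrable lborel (\<lambda>y. w y * (4 * nrm2 (Lop L \<Lambda> v y \<psi>) + 2 * c * N))"
  proof -
    have "(\<lambda>y. w y * (4 * nrm2 (Lop L \<Lambda> v y \<psi>) + 2 * c * N)) = (\<lambda>y. 4 * (w y * nrm2 (Lop L \<Lambda> v y \<psi>)) + (2 * c * N) * w y)"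
      by (auto simp: algebra_simps)
    then show ?thesis using i1 w by simp
  qed
  have ib: "(LINT y|lborel. w y * (4 * nrm2 (Lop L \<Lambda> v y \<psi>) + 2 * c * N)) = 4 * J + 2 * c * N * I"
  proof -
    have "(\<lambda>y. w y * (4 * nrm2 (Lop L \<Lambda> v y \<psi>) + 2 * c * N)) = (\<lambda>y. 4 * (w y * nrm2 (Lop L \<Lambda> v y \<psi>)) + (2 * c * N) * w y)"
      by (auto simp: algebra_simps)
    then show ?thesis using i1 w by (simp add: J_def I_def)
  qed
  have key: "4 * J + 2 * c * N * I \<le> 4 * H + 4 * c * I * N"
  proof -
    have "0 \<le> c * N * I" using c0 I0 N0 by simp
    then show ?thesis using JH by (simp add: algebra_simps)
  qed
  define Gp where "Gp = (\<lambda>y. w y * Re (fock_inner \<psi> (phi_plus L \<Lambda> v y (phi_plus L \<Lambda> v y \<psi>))))"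
  define Gm where "Gm = (\<lambda>y. w y * Re (fock_inner \<psi> (phi_minus L \<Lambda> v y (phi_minus L \<Lambda> v y \<psi>))))"
  have Pp: "(LINT y|lborel. Gp y) \<le> 4 * H + 4 * c * I * N"
  proof (cases "integrable lborel Gp")
    case True
    have "(LINT y|lborel. Gp y) \<le> (LINT y|lborel. w y * (4 * nrm2 (Lop L \<Lambda> v y \<psi>) + 2 * c * N))"
    proof (rule integral_mono[OF True i2])
      fix y
      show "Gp y \<le> w y * (4 * nrm2 (Lop L \<Lambda> v y \<psi>) + 2 * c * N)"
        unfolding Gp_def c_def N_def
        by (rule mult_left_mono[OF phi_plus_bound[OF L fm fp] wpos[rule_format]])
    qed
    then show ?thesis using ib key by linarith
  next
    case False
    then have "(LINT y|lborel. Gp y) = 0" by (simp add: not_integrable_integral_eq)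
    then show ?thesis using JH J0 c0 I0 N0 by simp
  qed
  have Pm: "- (LINT y|lborel. Gm y) \<le> 4 * H + 4 * c * I * N"
  proof (cases "integrable lborel Gm")
    case True
    have "(LINT y|lborel. - Gm y) \<le> (LINT y|lborel. w y * (4 * nrm2 (Lop L \<Lambda> v y \<psi>) + 2 * c * N))"
    proof (rule integral_mono)
      show "integrable lborel (\<lambda>y. - Gm y)" using True by simp
      show "integrable lborel (\<lambda>y. w y * (4 * nrm2 (Lop L \<Lambda> v y \<psi>) + 2 * c * N))" by (rule i2)
      fix y
      have "- Gm y = w y * (- Re (fock_inner \<psi> (phi_minus L \<Lambda> v y (phi_minus L \<Lambda> v y \<psi>))))"
        by (simp add: Gm_def)
      also have "\<dots> \<le> w y * (4 * nrm2 (Lop L \<Lambda> v y \<psi>) + 2 * c * N)"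
        unfolding c_def N_def
        by (rule mult_left_mono[OF phi_minus_bound[OF L fm fp] wpos[rule_format]])
      finally show "- Gm y \<le> w y * (4 * nrm2 (Lop L \<Lambda> v y \<psi>) + 2 * c * N)" .
    qed
    then have "- (LINT y|lborel. Gm y) \<le> 4 * J + 2 * c * N * I" using ib by simp
    then show ?thesis using key by linarith
  next
    case False
    then have "(LINT y|lborel. Gm y) = 0" by (simp add: not_integrable_integral_eq)
    then show ?thesis using JH J0 c0 I0 N0 by simp
  qed
  show "Re (fock_inner \<psi> (Hf L \<Lambda> \<psi>)) \<ge>
             - ((\<Sum>m\<in>modes L \<Lambda>. norm (fst m) * (cmod (v m))^2) / (2 * L^3))
               * (LINT y|lborel. w y) * Re (fock_inner \<psi> \<psi>)
             + 1/4 * (LINT y|lborel. w y * Re (fock_inner \<psi> (phi_plus L \<Lambda> v y (phi_plus L \<Lambda> v y \<psi>))))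
         \<and> Re (fock_inner \<psi> (Hf L \<Lambda> \<psi>)) \<ge>
             - ((\<Sum>m\<in>modes L \<Lambda>. norm (fst m) * (cmod (v m))^2) / (2 * L^3))
               * (LINT y|lborel. w y) * Re (fock_inner \<psi> \<psi>)
             - 1/4 * (LINT y|lborel. w y * Re (fock_inner \<psi> (phi_minus L \<Lambda> v y (phi_minus L \<Lambda> v y \<psi>))))"
    unfolding cdef Ndef I_def[symmetric] H_def[symmetric] Gp_def[symmetric] Gm_def[symmetric]
    using Pp Pm by linarith
qed

end
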